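(* Let $X$ be a set, $E$ an equivalence relation on $X$, and $\tau_0\subseteq\tau_1\subseteq\cdots$ quasi-Polish topologies on $X$ such that for each $i$ the $E$-saturation of every $\tau_i$-open set is $\tau_i$-open. Let $\tau$ be the topology generated by $\bigcup_i\tau_i$. Then the map $h:(X,\tau)/\!/E\to\varprojlim_i(X,\tau_i)/\!/E$, $[x]_{\approx_E^\tau}\mapsto([x]_{\approx_E^{\tau_i}})_i$, is a homeomorphism.
   Context: For a topology $\sigma$ on $X$, $x\approx_E^\sigma y$ iff the $\sigma$-closures of $[x]_E$ and $[y]_E$ coincide, and $(X,\sigma)/\!/E:=X/{\approx_E^\sigma}$ with the quotient topology. For $i$, the maps $(X,\tau_{i+1})/\!/E\to(X,\tau_i)/\!/E$, $[x]_{\approx^{\tau_{i+1}}_E}\mapsto[x]_{\approx^{\tau_i}_E}$, form an inverse sequence; $\varprojlim_i(X,\tau_i)/\!/E$ is the set of compatible sequences in $\prod_i(X,\tau_i)/\!/E$ with the subspace of the product topology. ($\tau$ is quasi-Polish and also has the saturation property.) A quasi-Polish space is a space homeomorphic to a $\mathbf\Pi^0_2$ subset of $\mathbb S^{\mathbb N}$ with $\mathbb S$ the Sierpiński space. *)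

theory Defs
  imports "HOL-Analysis.Analysis"
begin

definition sierpinski_space :: "bool topology" where
  "sierpinski_space = topology (\<lambda>U. U \<in> {{}, {True}, UNIV})"

definition sierpinski_cube :: "(nat \<Rightarrow> bool) topology" where
  "sierpinski_cube = product_topology (\<lambda>_. sierpinski_space) UNIV"

definition sigma02_in :: "'a topology \<Rightarrow> 'a set \<Rightarrow> bool" where
  "sigma02_in T A \<longleftrightarrow> (\<exists>U V :: nat \<Rightarrow> 'a set.
      (\<forall>n. openin T (U n) \<and> openin T (V n)) \<and> A = (\<Union>n. U n - V n))"

definition pi02_in :: "'a topology \<Rightarrow> 'a set \<Rightarrow> bool" where
  "pi02_in T A \<longleftrightarrow> A \<subseteq> topspace T \<and> sigma02_in T (topspace T - A)"

definition quasi_polish :: "'a topology \<Rightarrow> bool" where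
  "quasi_polish T \<longleftrightarrow> (\<exists>A. pi02_in sierpinski_cube A \<and>
      T homeomorphic_space subtopology sierpinski_cube A)"

definition saturation :: "('a \<times> 'a) set \<Rightarrow> 'a set \<Rightarrow> 'a set" where
  "saturation E U = E `` U"

definition approx_class :: "'a topology \<Rightarrow> ('a \<times> 'a) set \<Rightarrow> 'a \<Rightarrow> 'a set" where
  "approx_class \<sigma> E x =
     {y \<in> topspace \<sigma>. \<sigma> closure_of (E `` {y}) = \<sigma> closure_of (E `` {x})}"

definition approx_classes :: "'a topology \<Rightarrow> ('a \<times> 'a) set \<Rightarrow> 'a set set" where
  "approx_classes \<sigma> E = approx_class \<sigma> E ` topspace \<sigma>"

definition sep_quotient :: "'a topology \<Rightarrow> ('a \<times> 'a) set \<Rightarrow> 'a set topology" where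
  "sep_quotient \<sigma> E = topology (\<lambda>W. W \<subseteq> approx_classes \<sigma> E \<and>
      openin \<sigma> {x \<in> topspace \<sigma>. approx_class \<sigma> E x \<in> W})"

text \<open>Inverse limit of the sequence (X,\<tau>_i)//E with bonding maps
  [x]_{i+1} \<mapsto> [x]_i, as a subspace of the product.\<close>
definition sep_quotient_limit :: "(nat \<Rightarrow> 'a topology) \<Rightarrow> ('a \<times> 'a) set \<Rightarrow> (nat \<Rightarrow> 'a set) topology" where
  "sep_quotient_limit \<tau> E =
     subtopology (product_topology (\<lambda>i. sep_quotient (\<tau> i) E) UNIV)
       {s. \<forall>i. \<forall>x \<in> topspace (\<tau> (Suc i)). s (Suc i) = approx_class (\<tau> (Suc i)) E x
                 \<longrightarrow> s i = approx_class (\<tau> i) E x}"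

end

theory Submission
  imports Defs
begin


lemma sier_open: "openin sierpinski_space U \<longleftrightarrow> U \<in> {{}, {True}, UNIV}"
proof -
  have "istopology (\<lambda>U::bool set. U \<in> {{}, {True}, UNIV})"
    unfolding istopology_def
  proof (intro conjI allI impI)
    fix S T :: "bool set" assume "S \<in> {{}, {True}, UNIV}" "T \<in> {{}, {True}, UNIV}"
    then show "S \<inter> T \<in> {{}, {True}, UNIV}" by auto
  next
    fix K :: "bool set set" assume "\<forall>S\<in>K. S \<in> {{}, {True}, UNIV}"
    then have "K \<subseteq> {{}, {True}, UNIV}" by auto
    then show "\<Union>K \<in> {{}, {True}, UNIV}"
    proof -
      assume "K \<subseteq> {{}, {True}, UNIV}"
      then have "\<Union>K = {} \<or> \<Union>K = {True} \<or> \<Union>K = UNIV"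
        by (cases "UNIV \<in> K"; cases "{True} \<in> K"; auto; metis (full_types) UNIV_eq_I insertE singletonD)
      then show ?thesis by auto
    qed
  qed
  then show ?thesis unfolding sierpinski_space_def by simp
qed

lemma sier_topspace: "topspace sierpinski_space = UNIV"
  unfolding topspace_def using sier_open by auto

lemma cube_topspace: "topspace sierpinski_cube = UNIV"
  unfolding sierpinski_cube_def by (simp add: sier_topspace)

definition up :: "nat set \<Rightarrow> (nat \<Rightarrow> bool) set" where
  "up F = {f. \<forall>m\<in>F. f m}"

lemma up_open: "finite F \<Longrightarrow> openin sierpinski_cube (up F)"
proof -
  assume F: "finite F"
  have "up F = (\<Pi>\<^sub>E i\<in>UNIV. (\<lambda>i. if i \<in> F then {True} else UNIV) i)"
    by (auto simp: up_def PiE_iff) (metis singletonD)+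
  moreover have "openin sierpinski_cube (\<Pi>\<^sub>E i\<in>UNIV. (\<lambda>i. if i \<in> F then {True} else UNIV) i)"
    unfolding sierpinski_cube_def
    by (rule product_topology_basis) (auto simp: sier_open sier_topspace intro: finite_subset[OF _ F])
  ultimately show ?thesis by simp
qed

lemma cube_open_basis:
  assumes "openin sierpinski_cube Ob" "f \<in> Ob"
  shows "\<exists>F. finite F \<and> f \<in> up F \<and> up F \<subseteq> Ob"
proof -
  have o: "openin (product_topology (\<lambda>_. sierpinski_space) UNIV) Ob"
    using assms(1) unfolding sierpinski_cube_def .
  obtain Y where Y: "f \<in> (\<Pi>\<^sub>E i\<in>UNIV. Y i)" "\<And>i. openin sierpinski_space (Y i)"
    "finite {i. Y i \<noteq> topspace sierpinski_space}" "(\<Pi>\<^sub>E i\<in>UNIV. Y i) \<subseteq> Ob"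
    using product_topology_open_contains_basis[OF o assms(2)] by blast
  define F where "F = {i. Y i \<noteq> UNIV}"
  have fin: "finite F" using Y(3) by (simp add: F_def sier_topspace)
  have YF: "Y i = {True}" if "i \<in> F" for i
  proof -
    from Y(2)[of i] have "Y i \<in> {{},{True},UNIV}" by (simp add: sier_open)
    moreover from Y(1) have "f i \<in> Y i" by (simp add: PiE_iff)
    ultimately show ?thesis using that by (auto simp: F_def)
  qed
  have "f \<in> up F" using Y(1) YF by (auto simp: up_def PiE_iff)
  moreover have "up F \<subseteq> Ob"
  proof
    fix g assume "g \<in> up F"
    then have "g \<in> (\<Pi>\<^sub>E i\<in>UNIV. Y i)"
    proof -
      have "g i \<in> Y i" for i
      proof (cases "i \<in> F")
        case True then show ?thesis using YF[OF True] \<open>g \<in> up F\<close> by (simp add: up_def)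
      next
        case False then show ?thesis by (simp add: F_def)
      qed
      then show ?thesis by (simp add: PiE_iff)
    qed
    then show "g \<in> Ob" using Y(4) by auto
  qed
  ultimately show ?thesis using fin by blast
qed

lemma cube_open_mono:
  assumes "openin sierpinski_cube Ob" "f \<in> Ob" "\<And>m. f m \<Longrightarrow> g m"
  shows "g \<in> Ob"
  using cube_open_basis[OF assms(1,2)] assms(3) by (auto simp: up_def)

definition chi :: "nat set \<Rightarrow> nat \<Rightarrow> bool" where "chi F = (\<lambda>m. m \<in> F)"

lemma chi_up: "chi F \<in> up F" by (simp add: chi_def up_def)

lemma construction:
  fixes W :: "nat \<Rightarrow> 'a set" and e :: "nat \<Rightarrow> 'a \<Rightarrow> nat \<Rightarrow> bool"
    and R :: "nat \<Rightarrow> nat \<times> nat \<times> (nat \<Rightarrow> bool) set \<times> nat \<times> (nat \<Rightarrow> bool) set"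
  assumes W0: "W 0 \<noteq> {}"
  and dens: "\<And>k G y. (\<And>i. finite (G i)) \<Longrightarrow> (\<And>i. k < i \<Longrightarrow> G i = {}) \<Longrightarrow> y \<in> W k
         \<Longrightarrow> (\<And>i. e i y \<in> up (G i)) \<Longrightarrow> \<exists>y'\<in>W (Suc k). \<forall>i. e i y' \<in> up (G i)"
  and Ropen: "\<And>r s c1 S1 c2 S2. R r = (s,c1,S1,c2,S2) \<Longrightarrow> openin sierpinski_cube S1 \<and> openin sierpinski_cube S2"
  and Rvalid: "\<And>r s c1 S1 c2 S2 k y. R r = (s,c1,S1,c2,S2) \<Longrightarrow> s \<le> k \<Longrightarrow> y \<in> W k
         \<Longrightarrow> e c1 y \<in> S1 \<Longrightarrow> e c2 y \<in> S2"
  shows "\<exists>A. (\<forall>r s c1 S1 c2 S2. R r = (s,c1,S1,c2,S2) \<longrightarrow> A c1 \<in> S1 \<longrightarrow> A c2 \<in> S2) \<and>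
             (\<forall>i F j. finite F \<longrightarrow> A i \<in> up F \<longrightarrow> (\<exists>k\<ge>j. \<exists>y\<in>W k. e i y \<in> up F))"
proof -
  define ok where "ok k G \<longleftrightarrow> (\<forall>i. finite (G i)) \<and> (\<forall>i. k < i \<longrightarrow> G i = {}) \<and> (\<exists>y\<in>W k. \<forall>i. e i y \<in> up (G i))"
    for k G
  define cond where "cond k G \<longleftrightarrow> (case R (fst (prod_decode k)) of (s,c1,S1,c2,S2) \<Rightarrow>
      s \<le> k \<and> c1 \<le> k \<and> c2 \<le> k \<and> chi (G c1) \<in> S1)" for k G
  define pick where "pick k G = (case R (fst (prod_decode k)) of (s,c1,S1,c2,S2) \<Rightarrow>
      SOME H. finite H \<and> chi H \<in> S2 \<and> (\<exists>y\<in>W k. (\<forall>i. e i y \<in> up (G i)) \<and> (\<forall>m\<in>H. e c2 y m)))" for k G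
  define tgt where "tgt k = (case R (fst (prod_decode k)) of (s,c1,S1,c2,S2) \<Rightarrow> c2)" for k
  define step where "step k G = (if cond k G then G(tgt k := G (tgt k) \<union> pick k G) else G)" for k G
  define Gs where "Gs = rec_nat (\<lambda>_. {}) step"
  have Gs0: "Gs 0 = (\<lambda>_. {})" and GsS: "Gs (Suc k) = step k (Gs k)" for k
    by (simp_all add: Gs_def)
  have pickprop: "finite (pick k G) \<and> chi (pick k G) \<in> S2 \<and>
      (\<exists>y\<in>W k. (\<forall>i. e i y \<in> up (G i)) \<and> (\<forall>m\<in>pick k G. e c2 y m))"
    if okG: "ok k G" and cG: "cond k G" and Rk: "R (fst (prod_decode k)) = (s,c1,S1,c2,S2)" for k G s c1 S1 c2 S2
  proof -
    from okG obtain y where y: "y \<in> W k" "\<And>i. e i y \<in> up (G i)" unfolding ok_def by blast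
    from cG Rk have c: "s \<le> k" "c2 \<le> k" "chi (G c1) \<in> S1" unfolding cond_def by auto
    have op: "openin sierpinski_cube S1" "openin sierpinski_cube S2" using Ropen[OF Rk] by auto
    have "e c1 y \<in> S1"
      using cube_open_mono[OF op(1) c(3)] y(2)[of c1] by (auto simp: chi_def up_def)
    then have "e c2 y \<in> S2" using Rvalid[OF Rk c(1) y(1)] by blast
    then obtain H where H: "finite H" "e c2 y \<in> up H" "up H \<subseteq> S2"
      using cube_open_basis[OF op(2)] by blast
    have ex: "\<exists>H. finite H \<and> chi H \<in> S2 \<and> (\<exists>y\<in>W k. (\<forall>i. e i y \<in> up (G i)) \<and> (\<forall>m\<in>H. e c2 y m))"
      using H y chi_up[of H] by (auto simp: up_def)
    have "pick k G = (SOME H. finite H \<and> chi H \<in> S2 \<and> (\<exists>y\<in>W k. (\<forall>i. e i y \<in> up (G i)) \<and> (\<forall>m\<in>H. e c2 y m)))"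
      unfolding pick_def Rk by simp
    then show ?thesis using someI_ex[OF ex] by simp
  qed
  have okall: "ok k (Gs k)" for k
  proof (induction k)
    case 0
    then show ?case using W0 by (auto simp: ok_def Gs0 up_def)
  next
    case (Suc k)
    define G where "G = Gs k"
    have okG: "ok k G" using Suc G_def by simp
    obtain s c1 S1 c2 S2 where Rk: "R (fst (prod_decode k)) = (s,c1,S1,c2,S2)" by (metis prod_cases5)
    define G' where "G' = step k G"
    have "(\<forall>i. finite (G' i)) \<and> (\<forall>i. k < i \<longrightarrow> G' i = {}) \<and> (\<exists>y\<in>W k. \<forall>i. e i y \<in> up (G' i))"
    proof (cases "cond k G")
      case True
      have c2: "c2 \<le> k" using True Rk unfolding cond_def by auto
      have tg: "tgt k = c2" unfolding tgt_def Rk by simp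
      have G'eq: "G' = G(c2 := G c2 \<union> pick k G)" unfolding G'_def step_def using True tg by simp
      note pp = pickprop[OF okG True Rk]
      from pp obtain y where y: "y \<in> W k" "\<And>i. e i y \<in> up (G i)" "\<forall>m\<in>pick k G. e c2 y m" by blast
      have "\<forall>i. e i y \<in> up (G' i)"
        using y(2,3) unfolding G'eq by (auto simp: up_def)
      moreover have "\<forall>i. finite (G' i)" using okG pp unfolding G'eq ok_def by auto
      moreover have "\<forall>i. k < i \<longrightarrow> G' i = {}" using okG c2 unfolding G'eq ok_def by auto
      ultimately show ?thesis using y(1) by blast
    next
      case False
      then have "G' = G" unfolding G'_def step_def by simp
      then show ?thesis using okG unfolding ok_def by simp
    qed
    then obtain y where fin: "\<And>i. finite (G' i)" and em: "\<And>i. k < i \<Longrightarrow> G' i = {}"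
      and y: "y \<in> W k" "\<And>i. e i y \<in> up (G' i)" by blast
    obtain y' where "y' \<in> W (Suc k)" "\<forall>i. e i y' \<in> up (G' i)" using dens[OF fin em y] by blast
    then show ?case using fin em unfolding ok_def G'_def G_def GsS by auto
  qed
  have mono1: "Gs k i \<subseteq> Gs (Suc k) i" for k i
    unfolding GsS step_def by auto
  have mono: "k \<le> k' \<Longrightarrow> Gs k i \<subseteq> Gs k' i" for k k' i
    using lift_Suc_mono_le[of "\<lambda>k. Gs k i", OF mono1] by blast
  define A where "A i m \<longleftrightarrow> (\<exists>k. m \<in> Gs k i)" for i m
  have cover: "finite F \<Longrightarrow> F \<subseteq> {m. A i m} \<Longrightarrow> \<exists>K. F \<subseteq> Gs K i" for F i
  proof (induction F rule: finite_induct)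
    case empty then show ?case by auto
  next
    case (insert x F)
    then obtain K where K: "F \<subseteq> Gs K i" by auto
    from insert obtain k where k: "x \<in> Gs k i" unfolding A_def by auto
    have "insert x F \<subseteq> Gs (max K k) i" using K k mono[of K "max K k" i] mono[of k "max K k" i] by auto
    then show ?case by blast
  qed
  have P1: "A c2 \<in> S2" if Rr: "R r = (s,c1,S1,c2,S2)" and a: "A c1 \<in> S1" for r s c1 S1 c2 S2
  proof -
    have op: "openin sierpinski_cube S1" "openin sierpinski_cube S2" using Ropen[OF Rr] by auto
    obtain F where F: "finite F" "A c1 \<in> up F" "up F \<subseteq> S1" using cube_open_basis[OF op(1) a] by blast
    have "F \<subseteq> {m. A c1 m}" using F(2) by (auto simp: up_def)
    then obtain K where K: "F \<subseteq> Gs K c1" using cover[OF F(1)] by blast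
    define k where "k = prod_encode (r, K + s + c1 + c2)"
    have kge: "K + s + c1 + c2 \<le> k" unfolding k_def by (rule le_prod_encode_2)
    have Rk: "R (fst (prod_decode k)) = (s,c1,S1,c2,S2)" unfolding k_def using Rr by simp
    have "F \<subseteq> Gs k c1" using K mono[of K k c1] kge by auto
    then have "chi (Gs k c1) \<in> S1" using F(3) by (auto simp: chi_def up_def)
    then have cG: "cond k (Gs k)" unfolding cond_def Rk using kge by simp
    have tg: "tgt k = c2" unfolding tgt_def Rk by simp
    have GsSk: "Gs (Suc k) = (Gs k)(c2 := Gs k c2 \<union> pick k (Gs k))"
      unfolding GsS step_def using cG tg by simp
    have sub: "pick k (Gs k) \<subseteq> Gs (Suc k) c2" unfolding GsSk by simp
    have ch2: "chi (pick k (Gs k)) \<in> S2" using pickprop[OF okall cG Rk] by blast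
    have "\<And>m. chi (pick k (Gs k)) m \<Longrightarrow> A c2 m"
      using sub unfolding A_def chi_def by blast
    then show ?thesis by (rule cube_open_mono[OF op(2) ch2])
  qed
  have P2: "\<exists>k\<ge>j. \<exists>y\<in>W k. e i y \<in> up F" if fin: "finite F" and aF: "A i \<in> up F" for i F j
  proof -
    have "F \<subseteq> {m. A i m}" using aF by (auto simp: up_def)
    then obtain K where K: "F \<subseteq> Gs K i" using cover[OF fin] by blast
    define k where "k = max K j"
    have "F \<subseteq> Gs k i" using K mono[of K k i] by (auto simp: k_def)
    moreover obtain y where "y \<in> W k" "e i y \<in> up (Gs k i)" using okall[of k] unfolding ok_def by blast
    ultimately show ?thesis by (auto simp: k_def up_def intro!: exI[of _ "max K j"])
  qed
  show ?thesis using P1 P2 by blast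
qed



definition qpe :: "'a topology \<Rightarrow> ('a \<Rightarrow> nat \<Rightarrow> bool) \<Rightarrow> (nat \<Rightarrow> (nat \<Rightarrow> bool) set) \<Rightarrow> (nat \<Rightarrow> (nat \<Rightarrow> bool) set) \<Rightarrow> bool" where
  "qpe T e U V \<longleftrightarrow> inj_on e (topspace T) \<and>
     (\<forall>n. openin sierpinski_cube (U n) \<and> openin sierpinski_cube (V n)) \<and>
     (\<forall>f. f \<in> e ` topspace T \<longleftrightarrow> (\<forall>n. f \<in> U n \<longrightarrow> f \<in> V n)) \<and>
     (\<forall>Ob. openin sierpinski_cube Ob \<longrightarrow> openin T {y \<in> topspace T. e y \<in> Ob}) \<and>
     (\<forall>W. openin T W \<longrightarrow> (\<exists>Ob. openin sierpinski_cube Ob \<and> W = {y \<in> topspace T. e y \<in> Ob}))"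

lemma qp_embed:
  assumes "quasi_polish T"
  shows "\<exists>e U V. qpe T e U V"
proof -
  obtain A where A: "pi02_in sierpinski_cube A" "T homeomorphic_space subtopology sierpinski_cube A"
    using assms unfolding quasi_polish_def by blast
  obtain f g where fg: "homeomorphic_maps T (subtopology sierpinski_cube A) f g"
    using A(2) unfolding homeomorphic_space_def by blast
  have tsA: "topspace (subtopology sierpinski_cube A) = A" by (simp add: cube_topspace)
  have cf: "continuous_map T (subtopology sierpinski_cube A) f"
    and cg: "continuous_map (subtopology sierpinski_cube A) T g"
    and gf: "\<And>x. x \<in> topspace T \<Longrightarrow> g (f x) = x"
    and fgi: "\<And>y. y \<in> A \<Longrightarrow> f (g y) = y"
    using fg tsA unfolding homeomorphic_maps_def by auto
  have fA: "x \<in> topspace T \<Longrightarrow> f x \<in> A" for x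
    using cf tsA unfolding continuous_map_def by auto
  have gT: "y \<in> A \<Longrightarrow> g y \<in> topspace T" for y
    using cg tsA unfolding continuous_map_def by auto
  have img: "f ` topspace T = A"
    using fA gT fgi by (auto simp: image_iff) (metis)
  obtain U V :: "nat \<Rightarrow> (nat \<Rightarrow> bool) set" where UV: "\<forall>n. openin sierpinski_cube (U n) \<and> openin sierpinski_cube (V n)"
     "topspace sierpinski_cube - A = (\<Union>n. U n - V n)"
    using A(1) unfolding pi02_in_def sigma02_in_def by blast
  have char: "h \<in> f ` topspace T \<longleftrightarrow> (\<forall>n. h \<in> U n \<longrightarrow> h \<in> V n)" for h
  proof -
    have "h \<notin> A \<longleftrightarrow> h \<in> (\<Union>n. U n - V n)" using UV(2) by (auto simp: cube_topspace)
    then show ?thesis using img by auto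
  qed
  have E1: "openin T {y \<in> topspace T. f y \<in> Ob}" if "openin sierpinski_cube Ob" for Ob
  proof -
    have "openin (subtopology sierpinski_cube A) (Ob \<inter> A)"
      using that by (auto simp: openin_subtopology)
    then have "openin T {y \<in> topspace T. f y \<in> Ob \<inter> A}"
      using cf unfolding continuous_map_def by blast
    moreover have "{y \<in> topspace T. f y \<in> Ob \<inter> A} = {y \<in> topspace T. f y \<in> Ob}" using fA by auto
    ultimately show ?thesis by simp
  qed
  have E2: "\<exists>Ob. openin sierpinski_cube Ob \<and> W = {y \<in> topspace T. f y \<in> Ob}" if "openin T W" for W
  proof -
    have "openin (subtopology sierpinski_cube A) {a \<in> topspace (subtopology sierpinski_cube A). g a \<in> W}"
      using cg that unfolding continuous_map_def by blast
    then obtain Ob where Ob: "openin sierpinski_cube Ob" "{a \<in> A. g a \<in> W} = Ob \<inter> A"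
      unfolding openin_subtopology tsA by blast
    have "W = {y \<in> topspace T. f y \<in> Ob}"
    proof (intro set_eqI iffI)
      fix y assume y: "y \<in> W"
      then have yT: "y \<in> topspace T" using openin_subset[OF that] by auto
      then have "f y \<in> {a \<in> A. g a \<in> W}" using fA gf y by auto
      then show "y \<in> {y \<in> topspace T. f y \<in> Ob}" using Ob(2) yT by auto
    next
      fix y assume "y \<in> {y \<in> topspace T. f y \<in> Ob}"
      then have "y \<in> topspace T" "f y \<in> Ob \<inter> A" using fA by auto
      then show "y \<in> W" using Ob(2) gf by (metis (mono_tags, lifting) mem_Collect_eq)
    qed
    then show ?thesis using Ob(1) by blast
  qed
  have inj: "inj_on f (topspace T)" using gf by (metis inj_on_inverseI)
  show ?thesis unfolding qpe_def using inj UV(1) char E1 E2 by blast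
qed

definition sim :: "'a topology \<Rightarrow> ('a \<times> 'a) set \<Rightarrow> 'a \<Rightarrow> 'a \<Rightarrow> bool" where
  "sim \<sigma> E x y \<longleftrightarrow> (\<forall>W. openin \<sigma> W \<longrightarrow> (x \<in> E `` W \<longleftrightarrow> y \<in> E `` W))"

lemma closure_class:
  assumes "sym E"
  shows "z \<in> \<sigma> closure_of (E `` {x}) \<longleftrightarrow> z \<in> topspace \<sigma> \<and> (\<forall>T. z \<in> T \<and> openin \<sigma> T \<longrightarrow> x \<in> E `` T)"
proof -
  have "(\<exists>y. y \<in> E `` {x} \<and> y \<in> T) \<longleftrightarrow> x \<in> E `` T" for T
    using assms unfolding sym_def by auto
  then show ?thesis unfolding in_closure_of by simp
qed

lemma closure_eq_sim:
  assumes "sym E" "E \<subseteq> topspace \<sigma> \<times> topspace \<sigma>"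
  shows "\<sigma> closure_of (E `` {x}) = \<sigma> closure_of (E `` {y}) \<longleftrightarrow> sim \<sigma> E x y"
proof
  assume eq: "\<sigma> closure_of (E `` {x}) = \<sigma> closure_of (E `` {y})"
  have dir: "b \<in> E `` W" if cl: "\<sigma> closure_of (E `` {a}) = \<sigma> closure_of (E `` {b})"
     and "a \<in> E `` W" "openin \<sigma> W" for a b W
  proof -
    from that obtain w where w: "w \<in> W" "(w, a) \<in> E" by auto
    have "w \<in> topspace \<sigma>" using w(2) assms(2) by auto
    then have "w \<in> \<sigma> closure_of (E `` {a})"
      unfolding closure_class[OF assms(1)] using w(2) by auto
    then have "w \<in> \<sigma> closure_of (E `` {b})" using cl by simp
    then show ?thesis unfolding closure_class[OF assms(1)] using w(1) that(3) by blast
  qed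
  show "sim \<sigma> E x y" unfolding sim_def using dir eq by metis
next
  assume "sim \<sigma> E x y"
  then show "\<sigma> closure_of (E `` {x}) = \<sigma> closure_of (E `` {y})"
    unfolding sim_def by (auto simp: closure_class[OF assms(1)])
qed

lemma class_eq_sim:
  assumes "equiv (topspace \<sigma>) E" "x \<in> topspace \<sigma>" "y \<in> topspace \<sigma>"
  shows "approx_class \<sigma> E x = approx_class \<sigma> E y \<longleftrightarrow> sim \<sigma> E x y"
proof -
  have s: "sym E" and sub: "E \<subseteq> topspace \<sigma> \<times> topspace \<sigma>"
    using assms(1) unfolding equiv_def refl_on_def by auto
  have "approx_class \<sigma> E x = approx_class \<sigma> E y \<longleftrightarrow>
        \<sigma> closure_of (E `` {x}) = \<sigma> closure_of (E `` {y})"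
    unfolding approx_class_def using assms(2,3) by (auto simp: set_eq_iff)
  then show ?thesis using closure_eq_sim[OF s sub] by simp
qed

lemma in_class:
  assumes "equiv (topspace \<sigma>) E" "x \<in> topspace \<sigma>"
  shows "y \<in> approx_class \<sigma> E x \<longleftrightarrow> y \<in> topspace \<sigma> \<and> sim \<sigma> E y x"
proof -
  have s: "sym E" and sub: "E \<subseteq> topspace \<sigma> \<times> topspace \<sigma>"
    using assms(1) unfolding equiv_def refl_on_def by auto
  show ?thesis using closure_eq_sim[OF s sub, of y x] by (simp add: approx_class_def)
qed

lemma sim_E:
  assumes "equiv X E" "(x, y) \<in> E"
  shows "sim \<sigma> E x y"
  using assms unfolding sim_def equiv_def sym_def trans_def by blast

lemma sep_quotient_open:
  "openin (sep_quotient \<sigma> E) W \<longleftrightarrow> W \<subseteq> approx_classes \<sigma> E \<and>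
      openin \<sigma> {x \<in> topspace \<sigma>. approx_class \<sigma> E x \<in> W}"
proof -
  have "istopology (\<lambda>W. W \<subseteq> approx_classes \<sigma> E \<and>
      openin \<sigma> {x \<in> topspace \<sigma>. approx_class \<sigma> E x \<in> W})"
    unfolding istopology_def
  proof (rule conjI; intro allI impI)
    fix S T assume a: "S \<subseteq> approx_classes \<sigma> E \<and> openin \<sigma> {x \<in> topspace \<sigma>. approx_class \<sigma> E x \<in> S}"
      "T \<subseteq> approx_classes \<sigma> E \<and> openin \<sigma> {x \<in> topspace \<sigma>. approx_class \<sigma> E x \<in> T}"
    have "{x \<in> topspace \<sigma>. approx_class \<sigma> E x \<in> S \<inter> T} =
          {x \<in> topspace \<sigma>. approx_class \<sigma> E x \<in> S} \<inter> {x \<in> topspace \<sigma>. approx_class \<sigma> E x \<in> T}" by auto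
    then show "S \<inter> T \<subseteq> approx_classes \<sigma> E \<and> openin \<sigma> {x \<in> topspace \<sigma>. approx_class \<sigma> E x \<in> S \<inter> T}"
      using a by auto
  next
    fix K assume a: "\<forall>S\<in>K. S \<subseteq> approx_classes \<sigma> E \<and> openin \<sigma> {x \<in> topspace \<sigma>. approx_class \<sigma> E x \<in> S}"
    have "{x \<in> topspace \<sigma>. approx_class \<sigma> E x \<in> \<Union>K} =
          \<Union>((\<lambda>S. {x \<in> topspace \<sigma>. approx_class \<sigma> E x \<in> S}) ` K)" by auto
    then show "\<Union>K \<subseteq> approx_classes \<sigma> E \<and> openin \<sigma> {x \<in> topspace \<sigma>. approx_class \<sigma> E x \<in> \<Union>K}"
      using a by (auto intro!: openin_Union)
  qed
  then show ?thesis by (simp add: sep_quotient_def)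
qed

lemma sep_quotient_topspace: "topspace (sep_quotient \<sigma> E) = approx_classes \<sigma> E"
proof -
  have "{x \<in> topspace \<sigma>. approx_class \<sigma> E x \<in> approx_class \<sigma> E ` topspace \<sigma>} = topspace \<sigma>" by auto
  then have "openin (sep_quotient \<sigma> E) (approx_classes \<sigma> E)"
    unfolding sep_quotient_open approx_classes_def by auto
  then show ?thesis using openin_subset sep_quotient_open
    by (metis openin_topspace subset_antisym)
qed



lemma sim_refl: "sim \<sigma> E x x" by (simp add: sim_def)
lemma sim_sym: "sim \<sigma> E x y \<Longrightarrow> sim \<sigma> E y x" by (auto simp: sim_def)
lemma sim_trans: "sim \<sigma> E x y \<Longrightarrow> sim \<sigma> E y z \<Longrightarrow> sim \<sigma> E x z" by (auto simp: sim_def)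

lemma opn_lemma:
  fixes \<tau> :: "nat \<Rightarrow> 'a topology" and e :: "nat \<Rightarrow> 'a \<Rightarrow> nat \<Rightarrow> bool"
  assumes E1: "\<And>i Ob. openin sierpinski_cube Ob \<Longrightarrow> openin (\<tau> i) {y \<in> X. e i y \<in> Ob}"
    and mono: "\<And>i j U. i \<le> j \<Longrightarrow> openin (\<tau> i) U \<Longrightarrow> openin (\<tau> j) U"
    and fin: "\<And>i. finite (G i)"
  shows "n \<le> k \<Longrightarrow> openin (\<tau> k) {z \<in> X. \<forall>i\<le>n. e i z \<in> up (G i)}"
proof (induction n)
  case 0
  have "openin (\<tau> 0) {z \<in> X. e 0 z \<in> up (G 0)}" by (rule E1[OF up_open[OF fin]])
  then have o: "openin (\<tau> k) {z \<in> X. e 0 z \<in> up (G 0)}" by (rule mono[OF le0])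
  have eq: "{z \<in> X. \<forall>i\<le>0. e i z \<in> up (G i)} = {z \<in> X. e 0 z \<in> up (G 0)}" by auto
  show ?case unfolding eq by (rule o)
next
  case (Suc n)
  have "openin (\<tau> (Suc n)) {z \<in> X. e (Suc n) z \<in> up (G (Suc n))}" by (rule E1[OF up_open[OF fin]])
  then have a: "openin (\<tau> k) {z \<in> X. e (Suc n) z \<in> up (G (Suc n))}" by (rule mono[OF Suc(2)])
  have eq: "{z \<in> X. \<forall>i\<le>Suc n. e i z \<in> up (G i)} =
        {z \<in> X. \<forall>i\<le>n. e i z \<in> up (G i)} \<inter> {z \<in> X. e (Suc n) z \<in> up (G (Suc n))}"
    by (auto simp: le_Suc_eq)
  have ih: "openin (\<tau> k) {z \<in> X. \<forall>i\<le>n. e i z \<in> up (G i)}" using Suc(1) Suc(2) by simp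
  show ?case unfolding eq by (rule openin_Int[OF ih a])
qed

lemma surj_lemma:
  fixes X :: "'a set" and E :: "('a \<times> 'a) set" and \<tau> :: "nat \<Rightarrow> 'a topology"
  assumes eqv: "equiv X E"
    and tsp: "\<And>i. topspace (\<tau> i) = X"
    and qp: "\<And>i. quasi_polish (\<tau> i)"
    and mono1: "\<And>i U. openin (\<tau> i) U \<Longrightarrow> openin (\<tau> (Suc i)) U"
    and sat: "\<And>i U. openin (\<tau> i) U \<Longrightarrow> openin (\<tau> i) (saturation E U)"
    and xsX: "\<And>i. xs i \<in> X"
    and simc: "\<And>i. sim (\<tau> i) E (xs (Suc i)) (xs i)"
  shows "\<exists>x\<in>X. \<forall>i. sim (\<tau> i) E x (xs i)"
proof -
  have mono: "openin (\<tau> j) U" if "i \<le> j" "openin (\<tau> i) U" for i j U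
    using that(1) by (induction j rule: dec_induct) (use that(2) mono1 in auto)
  have sim_mono: "sim (\<tau> i) E x y" if "i \<le> j" "sim (\<tau> j) E x y" for i j x y
    unfolding sim_def
  proof (intro allI impI)
    fix W assume "openin (\<tau> i) W"
    then have "openin (\<tau> j) W" using mono[OF that(1)] by blast
    then show "x \<in> E `` W \<longleftrightarrow> y \<in> E `` W" using that(2) unfolding sim_def by blast
  qed
  have chain: "sim (\<tau> i) E (xs k) (xs i)" if "i \<le> k" for i k
    using that
  proof (induction k rule: dec_induct)
    case base then show ?case by (rule sim_refl)
  next
    case (step k)
    show ?case by (rule sim_trans[OF sim_mono[OF step(1) simc[of k]] step(3)])
  qed
  have Esub: "E \<subseteq> X \<times> X" and Esym: "\<And>a b. (a,b) \<in> E \<Longrightarrow> (b,a) \<in> E"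
    and Erefl: "\<And>a. a \<in> X \<Longrightarrow> (a,a) \<in> E"
    using eqv unfolding equiv_def refl_on_def sym_def by auto
  have simE: "(a,b) \<in> E \<Longrightarrow> sim \<sigma> E a b" for a b \<sigma> using sim_E[OF eqv] .
  have "\<forall>i. \<exists>e U V. qpe (\<tau> i) e U V" using qp_embed qp by blast
  then have "\<exists>e. \<forall>i. \<exists>U V. qpe (\<tau> i) (e i) U V" by (rule choice)
  then obtain e where "\<forall>i. \<exists>U V. qpe (\<tau> i) (e i) U V" by blast
  then have "\<exists>U. \<forall>i. \<exists>V. qpe (\<tau> i) (e i) (U i) V" by (rule choice)
  then obtain U where "\<forall>i. \<exists>V. qpe (\<tau> i) (e i) (U i) V" by blast
  then have "\<exists>V. \<forall>i. qpe (\<tau> i) (e i) (U i) (V i)" by (rule choice)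
  then obtain V where qpes0: "\<forall>i. qpe (\<tau> i) (e i) (U i) (V i)" by blast
  have qpes: "\<And>i. qpe (\<tau> i) (e i) (U i) (V i)" using qpes0 by blast
  have inj: "inj_on (e i) X" for i using qpes[of i] tsp[of i] unfolding qpe_def by simp
  have UVo: "openin sierpinski_cube (U i n)" "openin sierpinski_cube (V i n)" for i n
    using qpes[of i] unfolding qpe_def by auto
  have ch: "f \<in> e i ` X \<longleftrightarrow> (\<forall>n. f \<in> U i n \<longrightarrow> f \<in> V i n)" for i f
    using qpes[of i] tsp[of i] unfolding qpe_def by simp
  have E1: "openin (\<tau> i) {y \<in> X. e i y \<in> Ob}" if "openin sierpinski_cube Ob" for i Ob
    using qpes[of i] tsp[of i] that unfolding qpe_def by simp
  have E2: "\<exists>Ob. openin sierpinski_cube Ob \<and> W = {y \<in> X. e i y \<in> Ob}" if "openin (\<tau> i) W" for i W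
    using qpes[of i] tsp[of i] that unfolding qpe_def by simp
  define W where "W k = E `` {xs k}" for k
  have WX: "y \<in> W k \<Longrightarrow> y \<in> X" for y k using Esub unfolding W_def by auto
  have W0: "W 0 \<noteq> {}" using Erefl[OF xsX[of 0]] unfolding W_def by auto
  have Wsim: "sim (\<tau> i) E y (xs i)" if "y \<in> W k" "i \<le> k" for y k i
  proof -
    have "(y, xs k) \<in> E" using that(1) Esym unfolding W_def by auto
    then have "sim (\<tau> i) E y (xs k)" by (rule simE)
    then show ?thesis by (rule sim_trans[OF _ chain[OF that(2)]])
  qed
  have dens: "\<exists>y'\<in>W (Suc k). \<forall>i. e i y' \<in> up (G i)"
    if fin: "\<And>i. finite (G i)" and em: "\<And>i. k < i \<Longrightarrow> G i = {}" and y: "y \<in> W k"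
      and ye: "\<And>i. e i y \<in> up (G i)" for k G y
  proof -
    have opn: "openin (\<tau> k) {z \<in> X. \<forall>i\<le>n. e i z \<in> up (G i)}" if "n \<le> k" for n
      using opn_lemma[OF E1 mono fin that] .
    define B where "B = {z \<in> X. \<forall>i. e i z \<in> up (G i)}"
    have "B = {z \<in> X. \<forall>i\<le>k. e i z \<in> up (G i)}"
      unfolding B_def using em by (auto simp: up_def) (metis empty_iff not_le)
    then have Bo: "openin (\<tau> k) B" using opn by simp
    have yB: "y \<in> B" using WX[OF y] ye unfolding B_def by auto
    have "y \<in> E `` B" using yB Erefl[OF WX[OF y]] by auto
    moreover have sk: "sim (\<tau> k) E y (xs (Suc k))"
      by (rule sim_trans[OF Wsim[OF y order_refl] sim_sym[OF simc[of k]]])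
    ultimately have "xs (Suc k) \<in> E `` B" using Bo sk unfolding sim_def by simp
    then obtain z where "z \<in> B" "(z, xs (Suc k)) \<in> E" by auto
    then show ?thesis unfolding W_def B_def using Esym by auto
  qed
  define bas where "bas i n = {y \<in> X. e i y \<in> up (set_decode n)}" for i n
  have baso: "openin (\<tau> i) (bas i n)" for i n unfolding bas_def by (rule E1[OF up_open]) simp
  define Oq where "Oq i n = (SOME Ob. openin sierpinski_cube Ob \<and>
      {y \<in> X. e i y \<in> up {n}} = {y \<in> X. e (Suc i) y \<in> Ob})" for i n
  have Oq: "openin sierpinski_cube (Oq i n) \<and> {y \<in> X. e i y \<in> up {n}} = {y \<in> X. e (Suc i) y \<in> Oq i n}" for i n
  proof -
    have "openin (\<tau> i) {y \<in> X. e i y \<in> up {n}}" by (rule E1[OF up_open]) simp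
    then have "openin (\<tau> (Suc i)) {y \<in> X. e i y \<in> up {n}}" by (rule mono1)
    then have "\<exists>Ob. openin sierpinski_cube Ob \<and> {y \<in> X. e i y \<in> up {n}} = {y \<in> X. e (Suc i) y \<in> Ob}"
      by (rule E2)
    then show ?thesis unfolding Oq_def by (rule someI_ex)
  qed
  define Sq where "Sq i n = (SOME Ob. openin sierpinski_cube Ob \<and> E `` bas i n = {y \<in> X. e i y \<in> Ob})" for i n
  have Sq: "openin sierpinski_cube (Sq i n) \<and> E `` bas i n = {y \<in> X. e i y \<in> Sq i n}" for i n
  proof -
    have "openin (\<tau> i) (E `` bas i n)" using sat[OF baso] unfolding saturation_def .
    then have "\<exists>Ob. openin sierpinski_cube Ob \<and> E `` bas i n = {y \<in> X. e i y \<in> Ob}"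
      by (rule E2)
    then show ?thesis unfolding Sq_def by (rule someI_ex)
  qed
  define R where "R r = (case prod_decode (r div 4) of (i,n) \<Rightarrow>
      if r mod 4 = 0 then (0, i, U i n, i, V i n)
      else if r mod 4 = 1 then (0, i, up {n}, Suc i, Oq i n)
      else if r mod 4 = 2 then (0, Suc i, Oq i n, i, up {n})
      else (i, i, if xs i \<in> E `` bas i n then UNIV else {}, i, Sq i n))" for r
  have Ropen: "openin sierpinski_cube S1 \<and> openin sierpinski_cube S2"
    if "R r = (s,c1,S1,c2,S2)" for r s c1 S1 c2 S2
  proof -
    obtain i n where d: "prod_decode (r div 4) = (i,n)" by (metis surj_pair)
    have "r mod 4 = 0 \<or> r mod 4 = 1 \<or> r mod 4 = 2 \<or> r mod 4 = 3" by auto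
    moreover have "openin sierpinski_cube (UNIV :: (nat \<Rightarrow> bool) set)"
      by (metis cube_topspace openin_topspace)
    moreover have "openin sierpinski_cube ({} :: (nat \<Rightarrow> bool) set)" by simp
    moreover have "openin sierpinski_cube (up {n})" by (rule up_open) simp
    ultimately show ?thesis using that d UVo[of i n] Oq[of i n] Sq[of i n]
      by (auto simp: R_def split: if_splits)
  qed
  have Rvalid: "e c2 y \<in> S2"
    if Rr: "R r = (s,c1,S1,c2,S2)" and sk: "s \<le> k" and yW: "y \<in> W k" and c1: "e c1 y \<in> S1"
    for r s c1 S1 c2 S2 k y
  proof -
    obtain i n where d: "prod_decode (r div 4) = (i,n)" by (metis surj_pair)
    have yX: "y \<in> X" using WX[OF yW] .
    have "r mod 4 = 0 \<or> r mod 4 = 1 \<or> r mod 4 = 2 \<or> r mod 4 = 3" by auto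
    moreover
    { assume m: "r mod 4 = 0"
      then have "c1 = i" "S1 = U i n" "c2 = i" "S2 = V i n" using Rr d by (auto simp: R_def)
      moreover have "e i y \<in> e i ` X" using yX by simp
      ultimately have ?thesis using c1 ch by blast }
    moreover
    { assume m: "r mod 4 = 1"
      then have "c1 = i" "S1 = up {n}" "c2 = Suc i" "S2 = Oq i n" using Rr d by (auto simp: R_def)
      then have ?thesis using c1 Oq[of i n] yX by blast }
    moreover
    { assume m: "r mod 4 = 2"
      then have "c1 = Suc i" "S1 = Oq i n" "c2 = i" "S2 = up {n}" using Rr d by (auto simp: R_def)
      then have ?thesis using c1 Oq[of i n] yX by blast }
    moreover
    { assume m: "r mod 4 = 3"
      then have r3: "s = i" "c1 = i" "S1 = (if xs i \<in> E `` bas i n then UNIV else {})" "c2 = i" "S2 = Sq i n"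
        using Rr d by (auto simp: R_def)
      then have xi: "xs i \<in> E `` bas i n" using c1 by (auto split: if_splits)
      have "sim (\<tau> i) E y (xs i)" using Wsim[OF yW] sk r3(1) by simp
      then have "y \<in> E `` bas i n" using xi baso unfolding sim_def by blast
      then have ?thesis using Sq[of i n] r3 by auto }
    ultimately show ?thesis by argo
  qed
  have "\<exists>A. (\<forall>r s c1 S1 c2 S2. R r = (s,c1,S1,c2,S2) \<longrightarrow> A c1 \<in> S1 \<longrightarrow> A c2 \<in> S2) \<and>
             (\<forall>i F j. finite F \<longrightarrow> A i \<in> up F \<longrightarrow> (\<exists>k\<ge>j. \<exists>y\<in>W k. e i y \<in> up F))"
  proof (rule construction[of W e R])
    show "W 0 \<noteq> {}" by (rule W0)
  next
    fix k G y assume "\<And>i. finite (G i)" "\<And>i. k < i \<Longrightarrow> G i = {}" "y \<in> W k" "\<And>i. e i y \<in> up (G i)"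
    then show "\<exists>y'\<in>W (Suc k). \<forall>i. e i y' \<in> up (G i)" by (rule dens)
  next
    fix r s c1 S1 c2 S2 assume "R r = (s,c1,S1,c2,S2)"
    then show "openin sierpinski_cube S1 \<and> openin sierpinski_cube S2" by (rule Ropen)
  next
    fix r s c1 S1 c2 S2 k y assume "R r = (s,c1,S1,c2,S2)" "s \<le> k" "y \<in> W k" "e c1 y \<in> S1"
    then show "e c2 y \<in> S2" by (rule Rvalid)
  qed
  then obtain A where AA: "(\<forall>r s c1 S1 c2 S2. R r = (s,c1,S1,c2,S2) \<longrightarrow> A c1 \<in> S1 \<longrightarrow> A c2 \<in> S2) \<and>
             (\<forall>i F j. finite F \<longrightarrow> A i \<in> up F \<longrightarrow> (\<exists>k\<ge>j. \<exists>y\<in>W k. e i y \<in> up F))" ..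
  have A1: "\<And>r s c1 S1 c2 S2. R r = (s,c1,S1,c2,S2) \<Longrightarrow> A c1 \<in> S1 \<Longrightarrow> A c2 \<in> S2"
    by (rule conjunct1[OF AA, rule_format])
  have A2: "\<And>i F j. finite F \<Longrightarrow> A i \<in> up F \<Longrightarrow> \<exists>k\<ge>j. \<exists>y\<in>W k. e i y \<in> up F"
    by (rule conjunct2[OF AA, rule_format])
  have d1: "Suc (4 * p) div 4 = p" "Suc (4 * p) mod 4 = 1" for p :: nat by presburger+
  have d2: "Suc (Suc (4 * p)) div 4 = p" "Suc (Suc (4 * p)) mod 4 = 2" for p :: nat by presburger+
  have d3: "Suc (Suc (Suc (4 * p))) div 4 = p" "Suc (Suc (Suc (4 * p))) mod 4 = 3" for p :: nat by presburger+
  have R0e: "R (4 * prod_encode (i,n)) = (0, i, U i n, i, V i n)" for i n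
    unfolding R_def by (simp)
  have R1e: "R (4 * prod_encode (i,n) + 1) = (0, i, up {n}, Suc i, Oq i n)" for i n
    unfolding R_def by (simp add: d1)
  have R2e: "R (4 * prod_encode (i,n) + 2) = (0, Suc i, Oq i n, i, up {n})" for i n
    unfolding R_def by (simp add: d2)
  have R3e: "R (4 * prod_encode (i,n) + 3) = (i, i, if xs i \<in> E `` bas i n then UNIV else {}, i, Sq i n)" for i n
    unfolding R_def by (simp add: d3)
  have R0: "A i \<in> U i n \<Longrightarrow> A i \<in> V i n" for i n by (rule A1[OF R0e])
  have R1: "A i \<in> up {n} \<Longrightarrow> A (Suc i) \<in> Oq i n" for i n by (rule A1[OF R1e])
  have R2: "A (Suc i) \<in> Oq i n \<Longrightarrow> A i \<in> up {n}" for i n by (rule A1[OF R2e])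
  have R3: "xs i \<in> E `` bas i n \<Longrightarrow> A i \<in> Sq i n" for i n
    using A1[OF R3e[of i n]] by simp
  have Aimg: "A i \<in> e i ` X" for i unfolding ch using R0 by blast
  have "\<forall>i. \<exists>y. y \<in> X \<and> e i y = A i" using Aimg by (metis imageE)
  then have "\<exists>z. \<forall>i. z i \<in> X \<and> e i (z i) = A i" by (rule choice)
  then obtain z where z: "\<forall>i. z i \<in> X \<and> e i (z i) = A i" by blast
  have zX: "\<And>i. z i \<in> X" and ze: "\<And>i. e i (z i) = A i" using z by auto
  have zcoh: "z (Suc i) = z i" for i
  proof -
    have "e i (z (Suc i)) n = e i (z i) n" for n
    proof
      assume a: "e i (z (Suc i)) n"
      then have "z (Suc i) \<in> {y \<in> X. e i y \<in> up {n}}" using zX by (simp add: up_def)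
      then have "A (Suc i) \<in> Oq i n" using Oq[of i n] ze by auto
      then have "A i \<in> up {n}" by (rule R2)
      then show "e i (z i) n" using ze by (simp add: up_def)
    next
      assume a: "e i (z i) n"
      then have "A (Suc i) \<in> Oq i n" using R1 ze by (simp add: up_def)
      then have "z (Suc i) \<in> {y \<in> X. e i y \<in> up {n}}" using Oq[of i n] ze zX by auto
      then show "e i (z (Suc i)) n" by (simp add: up_def)
    qed
    then have "e i (z (Suc i)) = e i (z i)" by auto
    then show ?thesis using inj[of i] zX unfolding inj_on_def by blast
  qed
  have zconst: "z i = z 0" for i
  proof (induction i)
    case 0 show ?case by (rule refl)
  next
    case (Suc i) then show ?case using zcoh[of i] by (rule trans[rotated])
  qed
  define x where "x = z 0"
  have xX: "x \<in> X" using zX unfolding x_def by simp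
  have ex: "e i x = A i" for i
  proof -
    have "x = z i" using zconst[of i] unfolding x_def by (rule sym)
    then show ?thesis using ze[of i] by (rule ssubst)
  qed
  have "sim (\<tau> i) E x (xs i)" for i
    unfolding sim_def
  proof (intro allI impI iffI)
    fix Wo assume Wo: "openin (\<tau> i) Wo" and xin: "x \<in> E `` Wo"
    have "openin (\<tau> i) (E `` Wo)" using sat[OF Wo] unfolding saturation_def .
    then obtain Ob where Ob: "openin sierpinski_cube Ob" "E `` Wo = {y \<in> X. e i y \<in> Ob}" using E2 by blast
    then have "e i x \<in> Ob" using xin by auto
    then obtain F where F: "finite F" "e i x \<in> up F" "up F \<subseteq> Ob" using cube_open_basis[OF Ob(1)] by blast
    obtain k y where ky: "k \<ge> i" "y \<in> W k" "e i y \<in> up F" using A2[OF F(1), of i i] F(2) ex by auto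
    have "y \<in> E `` Wo" using Ob(2) ky(3) F(3) WX[OF ky(2)] by auto
    then show "xs i \<in> E `` Wo" using Wsim[OF ky(2,1)] Wo unfolding sim_def by blast
  next
    fix Wo assume Wo: "openin (\<tau> i) Wo" and xin: "xs i \<in> E `` Wo"
    then obtain w where w: "w \<in> Wo" "(w, xs i) \<in> E" by auto
    obtain Ob where Ob: "openin sierpinski_cube Ob" "Wo = {y \<in> X. e i y \<in> Ob}" using E2[OF Wo] by blast
    then have "e i w \<in> Ob" using w by auto
    then obtain F where F: "finite F" "e i w \<in> up F" "up F \<subseteq> Ob" using cube_open_basis[OF Ob(1)] by blast
    define n where "n = set_encode F"
    have sdn: "set_decode n = F" unfolding n_def using F(1) by simp
    have bsub: "bas i n \<subseteq> Wo" using Ob(2) F(3) unfolding bas_def sdn by auto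
    have "w \<in> bas i n" using w(1) Ob(2) F(2) unfolding bas_def sdn by auto
    then have "xs i \<in> E `` bas i n" using w(2) by auto
    then have "A i \<in> Sq i n" by (rule R3)
    then have "x \<in> E `` bas i n" using Sq[of i n] ex xX by auto
    then show "x \<in> E `` Wo" using bsub by auto
  qed
  then show ?thesis using xX by blast
qed



theorem lemma2p5:
  fixes X :: "'a set" and E :: "('a \<times> 'a) set" and \<tau> :: "nat \<Rightarrow> 'a topology"
  assumes "equiv X E"
    and "\<And>i. topspace (\<tau> i) = X"
    and "\<And>i. quasi_polish (\<tau> i)"
    and "\<And>i U. openin (\<tau> i) U \<Longrightarrow> openin (\<tau> (Suc i)) U"
    and "\<And>i U. openin (\<tau> i) U \<Longrightarrow> openin (\<tau> i) (saturation E U)"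
  defines "\<tau>\<^sub>\<omega> \<equiv> topology_generated_by (\<Union>i. {U. openin (\<tau> i) U})"
  shows "homeomorphic_map (sep_quotient \<tau>\<^sub>\<omega> E) (sep_quotient_limit \<tau> E)
           (\<lambda>C i. approx_class (\<tau> i) E (SOME x. x \<in> C))"
proof -
  note eqv = assms(1) and tsp = assms(2) and qp = assms(3) and mono1 = assms(4) and sat = assms(5)
  define S where "S = (\<Union>i. {U. openin (\<tau> i) U})"
  have mono: "openin (\<tau> j) U" if "i \<le> j" "openin (\<tau> i) U" for i j U
    using that(1) by (induction j rule: dec_induct) (use that(2) mono1 in auto)
  have opw_iff: "openin \<tau>\<^sub>\<omega> U \<longleftrightarrow> generate_topology_on S U" for U
    unfolding assms(6) S_def by (rule openin_topology_generated_by_iff)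
  have "\<Union>S = X"
  proof
    show "\<Union>S \<subseteq> X" unfolding S_def using openin_subset tsp by blast
    have "openin (\<tau> 0) X" using openin_topspace[of "\<tau> 0"] tsp[of 0] by simp
    then show "X \<subseteq> \<Union>S" unfolding S_def by blast
  qed
  then have tsw: "topspace \<tau>\<^sub>\<omega> = X" unfolding assms(6) S_def by simp
  have opw: "openin \<tau>\<^sub>\<omega> U" if "openin (\<tau> i) U" for i U
    unfolding opw_iff by (rule generate_topology_on.Basis) (use that in \<open>auto simp: S_def\<close>)
  have locw0: "\<forall>w\<in>W. \<exists>i U. openin (\<tau> i) U \<and> w \<in> U \<and> U \<subseteq> W" if "generate_topology_on S W" for W
    using that
  proof (induction rule: generate_topology_on.induct)
    case Empty then show ?case by simp
  next
    case (Int a b)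
    show ?case
    proof
      fix w assume w: "w \<in> a \<inter> b"
      then have "w \<in> a" "w \<in> b" by auto
      then obtain i Ua j Ub where A: "openin (\<tau> i) Ua" "w \<in> Ua" "Ua \<subseteq> a"
          and B: "openin (\<tau> j) Ub" "w \<in> Ub" "Ub \<subseteq> b"
        using Int.IH by meson
      have "openin (\<tau> (max i j)) Ua" by (rule mono[OF max.cobounded1 A(1)])
      moreover have "openin (\<tau> (max i j)) Ub" by (rule mono[OF max.cobounded2 B(1)])
      ultimately have "openin (\<tau> (max i j)) (Ua \<inter> Ub)" by (rule openin_Int)
      moreover have "w \<in> Ua \<inter> Ub" using A(2) B(2) by simp
      moreover have "Ua \<inter> Ub \<subseteq> a \<inter> b" using A(3) B(3) by auto
      ultimately show "\<exists>i U. openin (\<tau> i) U \<and> w \<in> U \<and> U \<subseteq> a \<inter> b" by blast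
    qed
  next
    case (UN K)
    show ?case
    proof
      fix w assume "w \<in> \<Union>K"
      then obtain k where k: "k \<in> K" "w \<in> k" by blast
      then obtain i U where U: "openin (\<tau> i) U" "w \<in> U" "U \<subseteq> k" using UN.IH by meson
      then have "U \<subseteq> \<Union>K" using k(1) by blast
      then show "\<exists>i U. openin (\<tau> i) U \<and> w \<in> U \<and> U \<subseteq> \<Union>K" using U(1,2) by blast
    qed
  next
    case (Basis s)
    then obtain i where "openin (\<tau> i) s" unfolding S_def by blast
    then show ?case by blast
  qed
  have locw: "\<exists>i U. openin (\<tau> i) U \<and> w \<in> U \<and> U \<subseteq> W" if "openin \<tau>\<^sub>\<omega> W" "w \<in> W" for W w
  proof -
    have "generate_topology_on S W" using that(1) unfolding opw_iff .
    then have "\<forall>w\<in>W. \<exists>i U. openin (\<tau> i) U \<and> w \<in> U \<and> U \<subseteq> W" by (rule locw0)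
    then show ?thesis using that(2) by blast
  qed
  have eqvi: "equiv (topspace (\<tau> i)) E" for i using eqv tsp[of i] by simp
  have eqvw: "equiv (topspace \<tau>\<^sub>\<omega>) E" using eqv tsw by simp
  have Esub: "E \<subseteq> X \<times> X" and Esym: "\<And>a b. (a,b) \<in> E \<Longrightarrow> (b,a) \<in> E"
    and Erefl: "\<And>a. a \<in> X \<Longrightarrow> (a,a) \<in> E"
    using eqv unfolding equiv_def refl_on_def sym_def by auto
  have ceqi: "approx_class (\<tau> i) E x = approx_class (\<tau> i) E y \<longleftrightarrow> sim (\<tau> i) E x y"
    if "x \<in> X" "y \<in> X" for i x y
    using class_eq_sim[OF eqvi] that tsp by simp
  have ceqw: "approx_class \<tau>\<^sub>\<omega> E x = approx_class \<tau>\<^sub>\<omega> E y \<longleftrightarrow> sim \<tau>\<^sub>\<omega> E x y"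
    if "x \<in> X" "y \<in> X" for x y
    using class_eq_sim[OF eqvw] that tsw by simp
  have simwi: "sim (\<tau> i) E x y" if sw: "sim \<tau>\<^sub>\<omega> E x y" for i x y
    unfolding sim_def
  proof (intro allI impI)
    fix W assume "openin (\<tau> i) W"
    then have "openin \<tau>\<^sub>\<omega> W" by (rule opw)
    then show "x \<in> E `` W \<longleftrightarrow> y \<in> E `` W" using sw unfolding sim_def by blast
  qed
  have dirl: "b \<in> E `` W" if all: "\<forall>i. sim (\<tau> i) E a b" and aW: "a \<in> E `` W" and Wo: "openin \<tau>\<^sub>\<omega> W" for a b W
  proof -
    obtain w where w: "w \<in> W" "(w, a) \<in> E" using aW by auto
    obtain i U where U: "openin (\<tau> i) U" "w \<in> U" "U \<subseteq> W" using locw[OF Wo w(1)] by blast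
    have "a \<in> E `` U" using w U by auto
    moreover have "sim (\<tau> i) E a b" using all by blast
    ultimately have "b \<in> E `` U" using U(1) unfolding sim_def by blast
    then show ?thesis using U(3) by auto
  qed
  have simiw: "sim \<tau>\<^sub>\<omega> E x y" if "\<forall>i. sim (\<tau> i) E x y" for x y
  proof -
    have sym': "\<forall>i. sim (\<tau> i) E y x"
    proof
      fix i show "sim (\<tau> i) E y x" by (rule sim_sym) (use that in blast)
    qed
    show ?thesis unfolding sim_def
    proof (intro allI impI iffI)
      fix W assume "openin \<tau>\<^sub>\<omega> W" "x \<in> E `` W"
      then show "y \<in> E `` W" using dirl[OF that] by blast
    next
      fix W assume "openin \<tau>\<^sub>\<omega> W" "y \<in> E `` W"
      then show "x \<in> E `` W" using dirl[OF sym'] by blast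
    qed
  qed
  define h where "h = (\<lambda>C i. approx_class (\<tau> i) E (SOME x. x \<in> C))"
  have hclass: "h (approx_class \<tau>\<^sub>\<omega> E x) = (\<lambda>i. approx_class (\<tau> i) E x)" if xX: "x \<in> X" for x
  proof -
    define y where "y = (SOME y. y \<in> approx_class \<tau>\<^sub>\<omega> E x)"
    have "x \<in> approx_class \<tau>\<^sub>\<omega> E x" using in_class[OF eqvw] xX tsw sim_refl by simp
    then have "y \<in> approx_class \<tau>\<^sub>\<omega> E x" unfolding y_def by (rule someI)
    then have yX: "y \<in> X" and syx: "sim \<tau>\<^sub>\<omega> E y x" using in_class[OF eqvw] xX tsw by auto
    have "approx_class (\<tau> i) E y = approx_class (\<tau> i) E x" for i
      using ceqi[OF yX xX] simwi[OF syx] by simp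
    then show ?thesis unfolding h_def y_def[symmetric] by auto
  qed
  define Lset where "Lset = {s. \<forall>i. \<forall>x \<in> topspace (\<tau> (Suc i)). s (Suc i) = approx_class (\<tau> (Suc i)) E x
                 \<longrightarrow> s i = approx_class (\<tau> i) E x}"
  have tsL: "topspace (sep_quotient_limit \<tau> E) = (\<Pi>\<^sub>E i\<in>UNIV. approx_classes (\<tau> i) E) \<inter> Lset"
    unfolding sep_quotient_limit_def Lset_def by (simp add: sep_quotient_topspace)
  have tsQ: "topspace (sep_quotient \<tau>\<^sub>\<omega> E) = approx_class \<tau>\<^sub>\<omega> E ` X"
    unfolding sep_quotient_topspace approx_classes_def tsw ..
  have hin: "(\<lambda>i. approx_class (\<tau> i) E x) \<in> topspace (sep_quotient_limit \<tau> E)" if xX: "x \<in> X" for x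
  proof -
    have "(\<lambda>i. approx_class (\<tau> i) E x) \<in> (\<Pi>\<^sub>E i\<in>UNIV. approx_classes (\<tau> i) E)"
      using xX tsp by (auto simp: approx_classes_def)
    moreover have "(\<lambda>i. approx_class (\<tau> i) E x) \<in> Lset"
      unfolding Lset_def
    proof (intro CollectI allI ballI impI)
      fix i y assume yX: "y \<in> topspace (\<tau> (Suc i))"
        and eq: "approx_class (\<tau> (Suc i)) E x = approx_class (\<tau> (Suc i)) E y"
      have yX': "y \<in> X" using yX tsp by simp
      have "sim (\<tau> (Suc i)) E x y" using eq ceqi[OF xX yX'] by simp
      then have "sim (\<tau> i) E x y" using mono[of i "Suc i"] unfolding sim_def by auto
      then show "approx_class (\<tau> i) E x = approx_class (\<tau> i) E y" using ceqi[OF xX yX'] by simp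
    qed
    ultimately show ?thesis unfolding tsL by blast
  qed
  have surj: "\<exists>x\<in>X. s = (\<lambda>i. approx_class (\<tau> i) E x)" if sL: "s \<in> topspace (sep_quotient_limit \<tau> E)" for s
  proof -
    have sPi: "s i \<in> approx_class (\<tau> i) E ` X" for i using sL unfolding tsL approx_classes_def tsp PiE_iff by blast
    have sLs: "s \<in> Lset" using sL unfolding tsL by auto
    have "\<forall>i. \<exists>x. x \<in> X \<and> s i = approx_class (\<tau> i) E x" using sPi by (auto simp: image_iff)
    then have "\<exists>xs. \<forall>i. xs i \<in> X \<and> s i = approx_class (\<tau> i) E (xs i)" by (rule choice)
    then obtain xs where xs: "\<forall>i. xs i \<in> X \<and> s i = approx_class (\<tau> i) E (xs i)" by blast
    have xsX: "\<And>i. xs i \<in> X" and sxs: "\<And>i. s i = approx_class (\<tau> i) E (xs i)" using xs by auto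
    have simc: "sim (\<tau> i) E (xs (Suc i)) (xs i)" for i
    proof -
      have L1: "\<forall>x \<in> topspace (\<tau> (Suc i)). s (Suc i) = approx_class (\<tau> (Suc i)) E x
                 \<longrightarrow> s i = approx_class (\<tau> i) E x" using sLs unfolding Lset_def by blast
      have "xs (Suc i) \<in> topspace (\<tau> (Suc i))" using xsX[of "Suc i"] tsp[of "Suc i"] by simp
      then have "s (Suc i) = approx_class (\<tau> (Suc i)) E (xs (Suc i)) \<longrightarrow> s i = approx_class (\<tau> i) E (xs (Suc i))"
        using L1 by blast
      then have "s i = approx_class (\<tau> i) E (xs (Suc i))" using sxs[of "Suc i"] by blast
      then have "approx_class (\<tau> i) E (xs (Suc i)) = approx_class (\<tau> i) E (xs i)" using sxs[of i] by simp
      then show ?thesis using ceqi[OF xsX xsX] by simp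
    qed
    obtain x where xX: "x \<in> X" and sx: "\<And>i. sim (\<tau> i) E x (xs i)"
      using surj_lemma[of X E \<tau> xs, OF eqv tsp qp mono1 sat xsX simc] by blast
    have "s i = approx_class (\<tau> i) E x" for i
    proof -
      have "approx_class (\<tau> i) E x = approx_class (\<tau> i) E (xs i)" using ceqi[OF xX xsX[of i]] sx[of i] by blast
      then show ?thesis using sxs[of i] by simp
    qed
    then show ?thesis using xX by blast
  qed
  have img: "h ` topspace (sep_quotient \<tau>\<^sub>\<omega> E) = topspace (sep_quotient_limit \<tau> E)"
  proof
    show "h ` topspace (sep_quotient \<tau>\<^sub>\<omega> E) \<subseteq> topspace (sep_quotient_limit \<tau> E)"
      unfolding tsQ using hclass hin by auto
    show "topspace (sep_quotient_limit \<tau> E) \<subseteq> h ` topspace (sep_quotient \<tau>\<^sub>\<omega> E)"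
    proof
      fix s assume "s \<in> topspace (sep_quotient_limit \<tau> E)"
      then obtain x where xX: "x \<in> X" and sx: "s = (\<lambda>i. approx_class (\<tau> i) E x)" using surj by blast
      then have "s = h (approx_class \<tau>\<^sub>\<omega> E x)" using hclass[OF xX] by simp
      moreover have "approx_class \<tau>\<^sub>\<omega> E x \<in> approx_class \<tau>\<^sub>\<omega> E ` X" using xX by blast
      ultimately show "s \<in> h ` topspace (sep_quotient \<tau>\<^sub>\<omega> E)" unfolding tsQ by blast
    qed
  qed
  have inj: "inj_on h (topspace (sep_quotient \<tau>\<^sub>\<omega> E))"
  proof (rule inj_onI)
    fix C D assume "C \<in> topspace (sep_quotient \<tau>\<^sub>\<omega> E)" "D \<in> topspace (sep_quotient \<tau>\<^sub>\<omega> E)" and hCD: "h C = h D"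
    then obtain x y where xy: "x \<in> X" "y \<in> X" "C = approx_class \<tau>\<^sub>\<omega> E x" "D = approx_class \<tau>\<^sub>\<omega> E y"
      unfolding tsQ by blast
    have "(\<lambda>i. approx_class (\<tau> i) E x) = (\<lambda>i. approx_class (\<tau> i) E y)"
      using hCD hclass[OF xy(1)] hclass[OF xy(2)] xy(3,4) by simp
    then have "\<forall>i. sim (\<tau> i) E x y" using ceqi[OF xy(1,2)] by (simp add: fun_eq_iff)
    then have "sim \<tau>\<^sub>\<omega> E x y" by (rule simiw)
    then show "C = D" using ceqw[OF xy(1,2)] xy(3,4) by simp
  qed
  have cont: "continuous_map (sep_quotient \<tau>\<^sub>\<omega> E) (sep_quotient_limit \<tau> E) h"
  proof -
    have comp: "continuous_map (sep_quotient \<tau>\<^sub>\<omega> E) (sep_quotient (\<tau> k) E) (\<lambda>C. h C k)" for k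
      unfolding continuous_map_def
    proof (intro conjI allI impI)
      show "(\<lambda>C. h C k) \<in> topspace (sep_quotient \<tau>\<^sub>\<omega> E) \<rightarrow> topspace (sep_quotient (\<tau> k) E)"
      proof
        fix C assume "C \<in> topspace (sep_quotient \<tau>\<^sub>\<omega> E)"
        then obtain x where xX: "x \<in> X" and Cx: "C = approx_class \<tau>\<^sub>\<omega> E x" unfolding tsQ by blast
        have "h C k = approx_class (\<tau> k) E x" using hclass[OF xX] Cx by simp
        then show "h C k \<in> topspace (sep_quotient (\<tau> k) E)"
          unfolding sep_quotient_topspace approx_classes_def tsp using xX by blast
      qed
    next
      fix Wq assume Wq: "openin (sep_quotient (\<tau> k) E) Wq"
      have pre: "{x \<in> topspace \<tau>\<^sub>\<omega>. approx_class \<tau>\<^sub>\<omega> E x \<in> {C \<in> topspace (sep_quotient \<tau>\<^sub>\<omega> E). h C k \<in> Wq}}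
            = {x \<in> topspace (\<tau> k). approx_class (\<tau> k) E x \<in> Wq}"
        unfolding tsw tsp tsQ using hclass by auto
      have "openin (\<tau> k) {x \<in> topspace (\<tau> k). approx_class (\<tau> k) E x \<in> Wq}"
        using Wq unfolding sep_quotient_open by blast
      then have "openin \<tau>\<^sub>\<omega> {x \<in> topspace \<tau>\<^sub>\<omega>. approx_class \<tau>\<^sub>\<omega> E x \<in> {C \<in> topspace (sep_quotient \<tau>\<^sub>\<omega> E). h C k \<in> Wq}}"
        unfolding pre by (rule opw)
      moreover have "{C \<in> topspace (sep_quotient \<tau>\<^sub>\<omega> E). h C k \<in> Wq} \<subseteq> approx_classes \<tau>\<^sub>\<omega> E"
        using sep_quotient_topspace by blast
      ultimately show "openin (sep_quotient \<tau>\<^sub>\<omega> E) {C \<in> topspace (sep_quotient \<tau>\<^sub>\<omega> E). h C k \<in> Wq}"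
        unfolding sep_quotient_open by blast
    qed
    have "continuous_map (sep_quotient \<tau>\<^sub>\<omega> E) (product_topology (\<lambda>i. sep_quotient (\<tau> i) E) UNIV) h"
      unfolding continuous_map_componentwise_UNIV using comp by blast
    moreover have "h \<in> topspace (sep_quotient \<tau>\<^sub>\<omega> E) \<rightarrow> Lset"
      using img unfolding tsL by blast
    ultimately show ?thesis
      unfolding sep_quotient_limit_def Lset_def[symmetric] continuous_map_in_subtopology by blast
  qed
  have opn: "open_map (sep_quotient \<tau>\<^sub>\<omega> E) (sep_quotient_limit \<tau> E) h"
    unfolding open_map_def
  proof (intro allI impI)
    fix Wq assume Wq: "openin (sep_quotient \<tau>\<^sub>\<omega> E) Wq"
    define Ov where "Ov = {x \<in> X. approx_class \<tau>\<^sub>\<omega> E x \<in> Wq}"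
    have Oo: "openin \<tau>\<^sub>\<omega> Ov" using Wq unfolding sep_quotient_open Ov_def tsw by blast
    have WqQ: "Wq \<subseteq> approx_class \<tau>\<^sub>\<omega> E ` X" using Wq unfolding sep_quotient_open approx_classes_def tsw by blast
    show "openin (sep_quotient_limit \<tau> E) (h ` Wq)"
      unfolding openin_subopen[of _ "h ` Wq"]
    proof
      fix t assume "t \<in> h ` Wq"
      then obtain x where xX: "x \<in> X" and xW: "approx_class \<tau>\<^sub>\<omega> E x \<in> Wq" and tx: "t = h (approx_class \<tau>\<^sub>\<omega> E x)"
        using WqQ by blast
      have xO: "x \<in> Ov" using xX xW unfolding Ov_def by blast
      obtain i U where U: "openin (\<tau> i) U" "x \<in> U" "U \<subseteq> Ov" using locw[OF Oo xO] by blast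
      define U' where "U' = E `` U"
      have U'o: "openin (\<tau> i) U'" using sat[OF U(1)] unfolding U'_def saturation_def .
      have xU': "x \<in> U'" using U(2) Erefl[OF xX] unfolding U'_def by blast
      have U'X: "U' \<subseteq> X" using Esub unfolding U'_def by blast
      have U'O: "U' \<subseteq> Ov"
      proof
        fix y assume "y \<in> U'"
        then obtain u where u: "u \<in> U" "(u, y) \<in> E" unfolding U'_def by blast
        have uX: "u \<in> X" and yX: "y \<in> X" using u(2) Esub by auto
        have "sim \<tau>\<^sub>\<omega> E y u" using sim_E[OF eqv Esym[OF u(2)]] .
        then have "approx_class \<tau>\<^sub>\<omega> E y = approx_class \<tau>\<^sub>\<omega> E u" using ceqw[OF yX uX] by simp
        moreover have "approx_class \<tau>\<^sub>\<omega> E u \<in> Wq" using u(1) U(3) unfolding Ov_def by blast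
        ultimately show "y \<in> Ov" using yX unfolding Ov_def by simp
      qed
      define Q where "Q = approx_class (\<tau> i) E ` U'"
      have Qpre: "{y \<in> X. approx_class (\<tau> i) E y \<in> Q} = U'"
      proof (intro set_eqI iffI)
        fix y assume "y \<in> {y \<in> X. approx_class (\<tau> i) E y \<in> Q}"
        then obtain u where yX: "y \<in> X" and u: "u \<in> U'" "approx_class (\<tau> i) E y = approx_class (\<tau> i) E u"
          unfolding Q_def by blast
        have "sim (\<tau> i) E y u" using u(2) ceqi[OF yX] u(1) U'X by blast
        then show "y \<in> U'" using u(1) U(1) unfolding sim_def U'_def by blast
      next
        fix y assume "y \<in> U'"
        then show "y \<in> {y \<in> X. approx_class (\<tau> i) E y \<in> Q}" using U'X unfolding Q_def by blast
      qed
      have Qo: "openin (sep_quotient (\<tau> i) E) Q"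
        unfolding sep_quotient_open
      proof
        show "Q \<subseteq> approx_classes (\<tau> i) E" unfolding Q_def approx_classes_def using U'X tsp by auto
        show "openin (\<tau> i) {x \<in> topspace (\<tau> i). approx_class (\<tau> i) E x \<in> Q}"
          unfolding tsp Qpre by (rule U'o)
      qed
      define T where "T = {t \<in> topspace (sep_quotient_limit \<tau> E). t i \<in> Q}"
      have projc: "continuous_map (sep_quotient_limit \<tau> E) (sep_quotient (\<tau> i) E) (\<lambda>t. t i)"
        unfolding sep_quotient_limit_def
        by (rule continuous_map_from_subtopology[OF continuous_map_product_projection]) simp
      have To: "openin (sep_quotient_limit \<tau> E) T"
        unfolding T_def by (rule openin_continuous_map_preimage[OF projc Qo])
      have tT: "t \<in> T"
        unfolding T_def tx hclass[OF xX] using hin[OF xX] xU' unfolding Q_def by blast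
      have Tsub: "T \<subseteq> h ` Wq"
      proof
        fix t' assume "t' \<in> T"
        then have t'L: "t' \<in> topspace (sep_quotient_limit \<tau> E)" and t'Q: "t' i \<in> Q" unfolding T_def by auto
        obtain x' where x'X: "x' \<in> X" and t'x: "t' = (\<lambda>i. approx_class (\<tau> i) E x')" using surj[OF t'L] by blast
        have "x' \<in> {y \<in> X. approx_class (\<tau> i) E y \<in> Q}" using x'X t'Q t'x by simp
        then have "x' \<in> U'" unfolding Qpre .
        then have "approx_class \<tau>\<^sub>\<omega> E x' \<in> Wq" using U'O unfolding Ov_def by blast
        moreover have "t' = h (approx_class \<tau>\<^sub>\<omega> E x')" using hclass[OF x'X] t'x by simp
        ultimately show "t' \<in> h ` Wq" by blast
      qed
      show "\<exists>T. openin (sep_quotient_limit \<tau> E) T \<and> t \<in> T \<and> T \<subseteq> h ` Wq"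
        using To tT Tsub by blast
    qed
  qed
  have "homeomorphic_map (sep_quotient \<tau>\<^sub>\<omega> E) (sep_quotient_limit \<tau> E) h"
    by (rule bijective_open_imp_homeomorphic_map[OF cont opn img inj])
  then show ?thesis unfolding h_def .
qed

end
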